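(* Let $n\ge 2$ and let $e_1,\dots,e_k\in\mathbb{C}^{n\times n}$ be an anticommuting family of nilpotent matrices with $e_1^2,\dots,e_k^2\neq0$. Then $k\le 2(n-2)$.
   Context: A family $e_1,\dots,e_k$ of complex $n\times n$ matrices is called anticommuting if $e_ie_j=-e_je_i$ for all distinct $i,j\in\{1,\dots,k\}$. *)

theory Defs
  imports "Jordan_Normal_Form.Matrix"
begin

definition nilpotent_mat :: "'a::semiring_1 mat \<Rightarrow> bool" where
  "nilpotent_mat A \<longleftrightarrow> (\<exists>m. A ^\<^sub>m m = 0\<^sub>m (dim_row A) (dim_col A))"

definition anticommuting :: "nat \<Rightarrow> (nat \<Rightarrow> 'a::ring_1 mat) \<Rightarrow> bool" where
  "anticommuting k e \<longleftrightarrow> (\<forall>i\<in>{1..k}. \<forall>j\<in>{1..k}. i \<noteq> j \<longrightarrow> e i * e j = - (e j * e i))"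

end

theory Submission
  imports Defs "Jordan_Normal_Form.Determinant"
begin



lemma factor_bound:
  fixes F G :: "nat \<Rightarrow> nat \<Rightarrow> complex" and c :: "nat \<Rightarrow> complex"
  assumes fg: "\<And>i j. i < k \<Longrightarrow> j < k \<Longrightarrow> (\<Sum>l<d. F i l * G l j) = (if i = j then c i else 0)"
    and cnz: "\<And>i. i < k \<Longrightarrow> c i \<noteq> 0"
  shows "k \<le> d"
proof (rule ccontr)
  assume "\<not> k \<le> d"
  hence dk: "d < k" by simp
  define F' where "F' = mat k k (\<lambda>(i,l). if l < d then F i l else 0)"
  define G' where "G' = mat k k (\<lambda>(l,j). if l < d then G l j / c j else 0)"
  have F'c: "F' \<in> carrier_mat k k" and G'c: "G' \<in> carrier_mat k k" unfolding F'_def G'_def by auto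
  have "F' * G' = 1\<^sub>m k"
  proof (rule eq_matI)
    fix i j assume ij: "i < dim_row (1\<^sub>m k)" "j < dim_col (1\<^sub>m k)"
    hence i: "i < k" and j: "j < k" by auto
    have "(F' * G') $$ (i,j) = (\<Sum>l\<in>{0..<k}. F' $$ (i,l) * G' $$ (l,j))"
      using i j F'c G'c by (simp add: scalar_prod_def)
    also have "\<dots> = (\<Sum>l\<in>{0..<k}. if l < d then F i l * G l j / c j else 0)"
      by (rule sum.cong, auto simp: F'_def G'_def i j)
    also have "\<dots> = (\<Sum>l\<in>{0..<d}. F i l * G l j / c j)"
      using dk by (subst sum.If_cases) (auto intro!: sum.cong)
    also have "\<dots> = (\<Sum>l<d. F i l * G l j) / c j"
      by (simp add: sum_divide_distrib atLeast0LessThan)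
    also have "\<dots> = 1\<^sub>m k $$ (i,j)" using fg[OF i j] cnz[OF j] i j by auto
    finally show "(F' * G') $$ (i,j) = 1\<^sub>m k $$ (i,j)" .
  qed (auto simp: F'_def G'_def)
  from mat_mult_left_right_inverse[OF F'c G'c this] have GF: "G' * F' = 1\<^sub>m k" .
  have km: "k - 1 < k" "\<not> k - 1 < d" using dk by auto
  have "(G' * F') $$ (k-1,k-1) = (\<Sum>l\<in>{0..<k}. G' $$ (k-1,l) * F' $$ (l,k-1))"
    using km F'c G'c by (simp add: scalar_prod_def)
  also have "\<dots> = 0" using km by (intro sum.neutral) (auto simp: G'_def)
  finally show False using GF km by simp
qed



lemma nil_step:
  assumes "\<forall>s\<in>S. f s \<in> S" "s \<in> S" "s \<noteq> zz" "(f^^m) s = zz"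
  shows "\<exists>t\<in>S. t \<noteq> zz \<and> f t = zz"
  using assms
proof (induction m arbitrary: s)
  case 0 thus ?case by simp
next
  case (Suc m)
  show ?case
  proof (cases "f s = zz")
    case True thus ?thesis using Suc.prems by blast
  next
    case False
    have "(f^^m) (f s) = zz" using Suc.prems(4) by (simp add: funpow_Suc_right del: funpow.simps)
    thus ?thesis using Suc.IH[of "f s"] Suc.prems False by blast
  qed
qed

lemma common_kernel:
  assumes "finite I"
    and "\<forall>i\<in>I. \<forall>s\<in>S. f i s \<in> S"
    and "\<forall>i\<in>I. \<forall>j\<in>I. i \<noteq> j \<longrightarrow> (\<forall>s\<in>S. f j s = zz \<longrightarrow> f j (f i s) = zz)"
    and "\<forall>i\<in>I. \<forall>s\<in>S. \<exists>m. (f i ^^ m) s = zz"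
    and "x \<in> S" "x \<noteq> zz"
  shows "\<exists>z\<in>S. z \<noteq> zz \<and> (\<forall>i\<in>I. f i z = zz)"
  using assms
proof (induction I arbitrary: S x rule: finite_induct)
  case empty thus ?case by blast
next
  case (insert j I)
  obtain m where "(f j ^^ m) x = zz" using insert.prems by blast
  then obtain t where t: "t \<in> S" "t \<noteq> zz" "f j t = zz"
    using nil_step[of S "f j" x zz m] insert.prems by blast
  define S' where "S' = {s\<in>S. f j s = zz}"
  have "\<exists>z\<in>S'. z \<noteq> zz \<and> (\<forall>i\<in>I. f i z = zz)"
  proof (rule insert.IH)
    show "\<forall>i\<in>I. \<forall>s\<in>S'. f i s \<in> S'"
    proof (intro ballI)
      fix i s assume i: "i \<in> I" and s: "s \<in> S'"
      have ij: "i \<noteq> j" using i insert.hyps(2) by blast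
      have "f i s \<in> S" using insert.prems(1) i s unfolding S'_def by blast
      moreover have "f j (f i s) = zz"
        using insert.prems(2) i ij s unfolding S'_def by blast
      ultimately show "f i s \<in> S'" unfolding S'_def by blast
    qed
    show "\<forall>i\<in>I. \<forall>j\<in>I. i \<noteq> j \<longrightarrow> (\<forall>s\<in>S'. f j s = zz \<longrightarrow> f j (f i s) = zz)"
      using insert.prems(2) unfolding S'_def by blast
    show "\<forall>i\<in>I. \<forall>s\<in>S'. \<exists>m. (f i ^^ m) s = zz"
      using insert.prems(3) unfolding S'_def by blast
    show "t \<in> S'" using t unfolding S'_def by blast
    show "t \<noteq> zz" by fact
  qed
  thus ?case unfolding S'_def by blast
qed



lemma iter_pow:
  fixes A :: "complex mat"
  assumes "A \<in> carrier_mat n n" "x \<in> carrier_vec n"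
  shows "((\<lambda>v. A *\<^sub>v v)^^m) x = (A ^\<^sub>m m) *\<^sub>v x"
  using assms(2)
proof (induction m arbitrary: x)
  case 0 thus ?case using assms by simp
next
  case (Suc m)
  have "((\<lambda>v. A *\<^sub>v v)^^Suc m) x = ((\<lambda>v. A *\<^sub>v v)^^m) (A *\<^sub>v x)"
    by (simp add: funpow_Suc_right del: funpow.simps)
  also have "\<dots> = (A ^\<^sub>m m) *\<^sub>v (A *\<^sub>v x)" using Suc assms by simp
  also have "\<dots> = (A ^\<^sub>m m * A) *\<^sub>v x" using assms Suc.prems
    by (subst assoc_mult_mat_vec[of _ n n _ n]) auto
  also have "\<dots> = (A ^\<^sub>m Suc m) *\<^sub>v x" by simp
  finally show ?case .
qed



lemma iter_pow_T:
  fixes A :: "complex mat"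
  assumes "A \<in> carrier_mat n n" "x \<in> carrier_vec n"
  shows "((\<lambda>v. transpose_mat A *\<^sub>v v)^^m) x = transpose_mat (A ^\<^sub>m m) *\<^sub>v x"
proof (induction m)
  case 0 thus ?case using assms by simp
next
  case (Suc m)
  have Am: "A ^\<^sub>m m \<in> carrier_mat n n" using assms by simp
  have "((\<lambda>v. transpose_mat A *\<^sub>v v)^^Suc m) x = transpose_mat A *\<^sub>v (transpose_mat (A ^\<^sub>m m) *\<^sub>v x)"
    using Suc by simp
  also have "\<dots> = (transpose_mat A * transpose_mat (A ^\<^sub>m m)) *\<^sub>v x"
    using assms Am by (subst assoc_mult_mat_vec[of _ n n _ n]) auto
  also have "transpose_mat A * transpose_mat (A ^\<^sub>m m) = transpose_mat (A ^\<^sub>m m * A)"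
    using transpose_mult[OF Am assms(1)] by simp
  finally show ?case by simp
qed



lemma ac_kill:
  fixes A B :: "'a :: comm_ring_1 mat"
  assumes A: "A \<in> carrier_mat n n" and B: "B \<in> carrier_mat n n"
    and ac: "B * A = - (A * B)" and s: "s \<in> carrier_vec n" and Bs: "B *\<^sub>v s = 0\<^sub>v n"
  shows "B *\<^sub>v (A *\<^sub>v s) = 0\<^sub>v n"
proof -
  have AB: "A * B \<in> carrier_mat n n" using A B by (rule mult_carrier_mat)
  have "B *\<^sub>v (A *\<^sub>v s) = (B * A) *\<^sub>v s" by (rule assoc_mult_mat_vec[OF B A s, symmetric])
  also have "\<dots> = (- (A * B)) *\<^sub>v s" by (simp only: ac)
  also have "\<dots> = - ((A * B) *\<^sub>v s)" by (rule uminus_mult_mat_vec) (use AB s in auto)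
  also have "(A * B) *\<^sub>v s = A *\<^sub>v (B *\<^sub>v s)" by (rule assoc_mult_mat_vec[OF A B s])
  also have "\<dots> = 0\<^sub>v n" unfolding Bs using A by (intro eq_vecI) auto
  finally show ?thesis by simp
qed



lemma mat_nz_entry:
  assumes "N \<in> carrier_mat r n" "N \<noteq> 0\<^sub>m r n"
  shows "\<exists>a c. a < r \<and> c < n \<and> N $$ (a,c) \<noteq> 0"
proof (rule ccontr)
  assume "\<not> ?thesis"
  hence "N = 0\<^sub>m r n" using assms(1) by (intro eq_matI) auto
  thus False using assms(2) by simp
qed

lemma vec_nz_entry:
  assumes "x \<in> carrier_vec n" "x \<noteq> 0\<^sub>v n"
  shows "\<exists>a<n. x $ a \<noteq> 0"
proof (rule ccontr)
  assume "\<not> ?thesis"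
  hence "x = 0\<^sub>v n" using assms(1) by (intro eq_vecI) auto
  thus False using assms(2) by simp
qed

lemma lin_comp:
  fixes N :: "complex mat"
  assumes "N \<in> carrier_mat r n" "w \<in> carrier_vec n" "v \<in> carrier_vec n" "a < r"
  shows "(N *\<^sub>v (w + t \<cdot>\<^sub>v v)) $ a = (N *\<^sub>v w) $ a + t * (N *\<^sub>v v) $ a"
proof -
  have rw: "row N a \<in> carrier_vec n" using assms by auto
  have "(N *\<^sub>v (w + t \<cdot>\<^sub>v v)) $ a = row N a \<bullet> (w + t \<cdot>\<^sub>v v)" using assms by simp
  also have "\<dots> = row N a \<bullet> w + row N a \<bullet> (t \<cdot>\<^sub>v v)"
    by (rule scalar_prod_add_distrib[OF rw assms(2)]) (use assms in auto)
  also have "row N a \<bullet> (t \<cdot>\<^sub>v v) = t * (row N a \<bullet> v)"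
    by (rule scalar_prod_smult_distrib[OF rw assms(3)])
  finally show ?thesis using assms by simp
qed

lemma avoid:
  fixes N :: "nat \<Rightarrow> complex mat"
  assumes "finite I" "\<forall>i\<in>I. N i \<in> carrier_mat (r i) n" "\<forall>i\<in>I. N i \<noteq> 0\<^sub>m (r i) n"
  shows "\<exists>w\<in>carrier_vec n. \<forall>i\<in>I. N i *\<^sub>v w \<noteq> 0\<^sub>v (r i)"
  using assms
proof (induction I rule: finite_induct)
  case empty
  have "0\<^sub>v n \<in> carrier_vec n" by simp
  thus ?case by blast
next
  case (insert j I)
  then obtain w where w: "w \<in> carrier_vec n" "\<forall>i\<in>I. N i *\<^sub>v w \<noteq> 0\<^sub>v (r i)" by auto
  show ?case
  proof (cases "N j *\<^sub>v w = 0\<^sub>v (r j)")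
    case False thus ?thesis using w by auto
  next
    case True
    have Nj: "N j \<in> carrier_mat (r j) n" "N j \<noteq> 0\<^sub>m (r j) n" using insert.prems by auto
    obtain a c where ac: "a < r j" "c < n" "N j $$ (a,c) \<noteq> 0" using mat_nz_entry[OF Nj] by blast
    define v :: "complex vec" where "v = unit_vec n c"
    have v: "v \<in> carrier_vec n" unfolding v_def by simp
    have Njv: "(N j *\<^sub>v v) $ a = N j $$ (a,c)" using Nj ac unfolding v_def by simp
    define bad where "bad i = {t. N i *\<^sub>v (w + t \<cdot>\<^sub>v v) = 0\<^sub>v (r i)}" for i
    have fin: "finite (bad i)" if i: "i \<in> I" for i
    proof -
      have Ni: "N i \<in> carrier_mat (r i) n" using insert.prems i by auto
      have "N i *\<^sub>v w \<in> carrier_vec (r i)" using Ni w by auto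
      then obtain b where b: "b < r i" "(N i *\<^sub>v w) $ b \<noteq> 0"
        using vec_nz_entry w i by blast
      have "bad i \<subseteq> {- (N i *\<^sub>v w) $ b / (N i *\<^sub>v v) $ b}"
      proof
        fix t assume "t \<in> bad i"
        hence "(N i *\<^sub>v (w + t \<cdot>\<^sub>v v)) $ b = 0" unfolding bad_def using b by auto
        hence eq: "(N i *\<^sub>v w) $ b + t * (N i *\<^sub>v v) $ b = 0" using lin_comp[OF Ni w(1) v b(1)] by simp
        hence "(N i *\<^sub>v v) $ b \<noteq> 0" using b by auto
        thus "t \<in> {- (N i *\<^sub>v w) $ b / (N i *\<^sub>v v) $ b}" using eq
          by (simp add: field_simps eq_neg_iff_add_eq_0)
      qed
      thus ?thesis using finite_subset by blast
    qed
    have "finite (insert 0 (\<Union>i\<in>I. bad i))" using fin insert.hyps(1) by auto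
    then obtain t where t: "t \<notin> insert 0 (\<Union>i\<in>I. bad i)"
      using ex_new_if_finite[OF infinite_UNIV_char_0] by blast
    have "N j *\<^sub>v (w + t \<cdot>\<^sub>v v) \<noteq> 0\<^sub>v (r j)"
    proof
      assume "N j *\<^sub>v (w + t \<cdot>\<^sub>v v) = 0\<^sub>v (r j)"
      hence "(N j *\<^sub>v (w + t \<cdot>\<^sub>v v)) $ a = 0" using ac by simp
      hence "(N j *\<^sub>v w) $ a + t * N j $$ (a,c) = 0" using lin_comp[OF Nj(1) w(1) v ac(1)] Njv by simp
      hence "t * N j $$ (a,c) = 0" using True ac by simp
      thus False using t ac by simp
    qed
    moreover have "\<forall>i\<in>I. N i *\<^sub>v (w + t \<cdot>\<^sub>v v) \<noteq> 0\<^sub>v (r i)" using t unfolding bad_def by blast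
    moreover have "w + t \<cdot>\<^sub>v v \<in> carrier_vec n" using w v by simp
    ultimately show ?thesis by blast
  qed
qed



lemma decomp:
  fixes a b y :: "complex vec"
  assumes a: "a \<in> carrier_vec n" and b: "b \<in> carrier_vec n" and y: "y \<in> carrier_vec n"
    and ya: "y \<bullet> a = 0" and ap: "a $ p = 0" and yq: "y $ q \<noteq> 0" and pq: "p \<noteq> q" "p < n" "q < n"
  shows "b \<bullet> a = (\<Sum>l\<in>{0..<n}-{p,q}. (b $ l - b $ q * y $ l / y $ q) * a $ l)"
proof -
  let ?L = "{0..<n}-{p,q}"
  have split: "sum f {0..<n} = f p + f q + sum f ?L" for f :: "nat \<Rightarrow> complex"
  proof -
    have "sum f {0..<n} = f p + sum f ({0..<n} - {p})" using pq by (simp add: sum.remove)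
    also have "sum f ({0..<n} - {p}) = f q + sum f ({0..<n} - {p} - {q})" using pq by (simp add: sum.remove)
    also have "{0..<n} - {p} - {q} = ?L" by auto
    finally show ?thesis by simp
  qed
  have "0 = (\<Sum>l\<in>{0..<n}. y $ l * a $ l)" using ya a unfolding scalar_prod_def by simp
  also have "\<dots> = y $ q * a $ q + (\<Sum>l\<in>?L. y $ l * a $ l)" using ap by (simp add: split)
  finally have aq: "a $ q = - (\<Sum>l\<in>?L. y $ l * a $ l) / y $ q" using yq
    by (simp add: field_simps eq_neg_iff_add_eq_0)
  have "b \<bullet> a = (\<Sum>l\<in>{0..<n}. b $ l * a $ l)" using a unfolding scalar_prod_def by simp
  also have "\<dots> = b $ q * a $ q + (\<Sum>l\<in>?L. b $ l * a $ l)" using ap by (simp add: split)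
  also have "\<dots> = (\<Sum>l\<in>?L. b $ l * a $ l) - b $ q / y $ q * (\<Sum>l\<in>?L. y $ l * a $ l)"
    unfolding aq by (simp add: field_simps)
  also have "\<dots> = (\<Sum>l\<in>?L. (b $ l - b $ q * y $ l / y $ q) * a $ l)"
    by (simp add: sum_distrib_left sum_subtractf[symmetric] algebra_simps)
  finally show ?thesis .
qed

lemma sum_split_add:
  fixes a b :: nat and f :: "nat \<Rightarrow> 'a::comm_monoid_add"
  shows "(\<Sum>l<a+b. f l) = (\<Sum>l<a. f l) + (\<Sum>l<b. f (a+l))"
  by (induction b) (simp_all add: add_ac)

lemma final_bound:
  fixes M :: "nat \<Rightarrow> nat \<Rightarrow> complex" and X Y :: "nat \<Rightarrow> nat \<Rightarrow> complex"
  assumes L: "finite L"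
    and Mdef: "\<And>i j. i \<in> {1..k} \<Longrightarrow> j \<in> {1..k} \<Longrightarrow> M i j = (\<Sum>l\<in>L. X i l * Y l j)"
    and anti: "\<And>i j. i \<in> {1..k} \<Longrightarrow> j \<in> {1..k} \<Longrightarrow> i \<noteq> j \<Longrightarrow> M i j + M j i = 0"
    and diag: "\<And>i. i \<in> {1..k} \<Longrightarrow> M i i \<noteq> 0"
  shows "k \<le> 2 * card L"
proof -
  define m where "m = card L"
  obtain g where g: "bij_betw g {0..<m} L" using ex_bij_betw_nat_finite[OF L] unfolding m_def by blast
  have re: "(\<Sum>l\<in>L. h l) = (\<Sum>l<m. h (g l))" for h :: "nat \<Rightarrow> complex"
    using sum.reindex_bij_betw[OF g, of h] by (simp add: atLeast0LessThan)
  define F where "F i l = (if l < m then X (Suc i) (g l) else Y (g (l - m)) (Suc i))" for i l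
  define G where "G l j = (if l < m then Y (g l) (Suc j) else X (Suc j) (g (l - m)))" for l j
  have "k \<le> m + m"
  proof (rule factor_bound[where F = F and G = G and c = "\<lambda>i. 2 * M (Suc i) (Suc i)"])
    fix i j assume ij: "i < k" "j < k"
    hence I: "Suc i \<in> {1..k}" "Suc j \<in> {1..k}" by auto
    have "(\<Sum>l<m+m. F i l * G l j) = (\<Sum>l<m. F i l * G l j) + (\<Sum>l<m. F i (m+l) * G (m+l) j)"
      by (rule sum_split_add)
    also have "(\<Sum>l<m. F i l * G l j) = M (Suc i) (Suc j)"
      unfolding Mdef[OF I] re F_def G_def by simp
    also have "(\<Sum>l<m. F i (m+l) * G (m+l) j) = M (Suc j) (Suc i)"
      unfolding Mdef[OF I(2,1)] re F_def G_def by (simp add: mult.commute)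
    finally show "(\<Sum>l<m+m. F i l * G l j) = (if i = j then 2 * M (Suc i) (Suc i) else 0)"
      using anti[OF I] by auto
  next
    fix i assume "i < k" thus "2 * M (Suc i) (Suc i) \<noteq> 0" using diag by auto
  qed
  thus ?thesis unfolding m_def by simp
qed



theorem claim1:
  fixes n k :: nat and e :: "nat \<Rightarrow> complex mat"
  assumes "n \<ge> 2"
    and "\<And>i. i \<in> {1..k} \<Longrightarrow> e i \<in> carrier_mat n n"
    and "anticommuting k e"
    and "\<And>i. i \<in> {1..k} \<Longrightarrow> nilpotent_mat (e i)"
    and "\<And>i. i \<in> {1..k} \<Longrightarrow> e i * e i \<noteq> 0\<^sub>m n n"
  shows "k \<le> 2 * (n - 2)"
proof -
  let ?I = "{1..k}"
  have n2: "n \<ge> 2" by fact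
  have ec: "\<And>i. i \<in> ?I \<Longrightarrow> e i \<in> carrier_mat n n" by fact
  have ecT: "\<And>i. i \<in> ?I \<Longrightarrow> transpose_mat (e i) \<in> carrier_mat n n" using ec by auto
  have evc: "e i *\<^sub>v v \<in> carrier_vec n" if "i \<in> ?I" "v \<in> carrier_vec n" for i v
    using ec[OF that(1)] that(2) by (rule mult_mat_vec_carrier)
  have eTvc: "transpose_mat (e i) *\<^sub>v v \<in> carrier_vec n" if "i \<in> ?I" "v \<in> carrier_vec n" for i v
    using ecT[OF that(1)] that(2) by (rule mult_mat_vec_carrier)
  have ac: "\<And>i j. i \<in> ?I \<Longrightarrow> j \<in> ?I \<Longrightarrow> i \<noteq> j \<Longrightarrow> e i * e j = - (e j * e i)"
    using assms(3) unfolding anticommuting_def by blast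
  have nil: "\<exists>m. e i ^\<^sub>m m = 0\<^sub>m n n" if i: "i \<in> ?I" for i
    using assms(4)[OF i] ec[OF i] unfolding nilpotent_mat_def by auto
  have sqnz: "\<And>i. i \<in> ?I \<Longrightarrow> e i * e i \<noteq> 0\<^sub>m n n" by fact
  have z0: "s \<in> carrier_vec n \<Longrightarrow> 0\<^sub>m n n *\<^sub>v s = 0\<^sub>v n" for s :: "complex vec" by (intro eq_vecI) auto
  have z0T: "transpose_mat (0\<^sub>m n n :: complex mat) = 0\<^sub>m n n" by (intro eq_matI) auto
  obtain w where w: "w \<in> carrier_vec n" "\<forall>i\<in>?I. (e i * e i) *\<^sub>v w \<noteq> 0\<^sub>v n"
    using avoid[of ?I "\<lambda>i. e i * e i" "\<lambda>_. n" n] ec sqnz by force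
  define cc where "cc i = (e i * e i) *\<^sub>v w" for i
  have ccc: "cc i \<in> carrier_vec n" if i: "i \<in> ?I" for i
    unfolding cc_def using mult_carrier_mat[OF ec[OF i] ec[OF i]] w(1) by (rule mult_mat_vec_carrier)
  define N' where "N' i = mat 1 n (\<lambda>(_,l). cc i $ l)" for i
  have N'nz: "N' i \<noteq> 0\<^sub>m 1 n" if i: "i \<in> ?I" for i
  proof
    assume eq: "N' i = 0\<^sub>m 1 n"
    have "cc i \<noteq> 0\<^sub>v n" using w i unfolding cc_def by auto
    then obtain l where l: "l < n" "cc i $ l \<noteq> 0" using vec_nz_entry ccc[OF i] by blast
    have "N' i $$ (0,l) = cc i $ l" unfolding N'_def using l by simp
    thus False using eq l by simp
  qed
  obtain u where u: "u \<in> carrier_vec n" "\<forall>i\<in>?I. N' i *\<^sub>v u \<noteq> 0\<^sub>v 1"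
    using avoid[of ?I N' "\<lambda>_. 1" n] N'nz unfolding N'_def by force
  have ccu: "cc i \<bullet> u \<noteq> 0" if i: "i \<in> ?I" for i
  proof
    assume cu: "cc i \<bullet> u = 0"
    have "row (N' i) 0 = cc i" using ccc[OF i] by (intro eq_vecI) (auto simp: N'_def)
    hence "N' i *\<^sub>v u = 0\<^sub>v 1" using cu
      by (intro eq_vecI) (auto simp: N'_def)
    thus False using u i by auto
  qed
  have "\<exists>y\<in>carrier_vec n. y \<noteq> 0\<^sub>v n \<and> (\<forall>i\<in>?I. transpose_mat (e i) *\<^sub>v y = 0\<^sub>v n)"
  proof (rule common_kernel[where f = "\<lambda>i v. transpose_mat (e i) *\<^sub>v v" and S = "carrier_vec n :: complex vec set"])
    show "finite ?I" by simp
    show "\<forall>i\<in>?I. \<forall>s\<in>carrier_vec n. transpose_mat (e i) *\<^sub>v s \<in> carrier_vec n"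
      using eTvc by blast
    show "\<forall>i\<in>?I. \<forall>j\<in>?I. i \<noteq> j \<longrightarrow> (\<forall>s\<in>carrier_vec n. transpose_mat (e j) *\<^sub>v s = 0\<^sub>v n \<longrightarrow>
        transpose_mat (e j) *\<^sub>v (transpose_mat (e i) *\<^sub>v s) = 0\<^sub>v n)"
    proof (intro ballI impI)
      fix i j and s :: "complex vec" assume i: "i \<in> ?I" and j: "j \<in> ?I" and ij: "i \<noteq> j" and s: "s \<in> carrier_vec n"
        and js: "transpose_mat (e j) *\<^sub>v s = 0\<^sub>v n"
      have "transpose_mat (e j) * transpose_mat (e i) = transpose_mat (e i * e j)"
        using transpose_mult[OF ec[OF i] ec[OF j]] by simp
      also have "\<dots> = - transpose_mat (e j * e i)" using ac[OF i j ij] transpose_uminus by simp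
      also have "transpose_mat (e j * e i) = transpose_mat (e i) * transpose_mat (e j)"
        using transpose_mult[OF ec[OF j] ec[OF i]] by simp
      finally show "transpose_mat (e j) *\<^sub>v (transpose_mat (e i) *\<^sub>v s) = 0\<^sub>v n"
        using ac_kill[OF ecT[OF i] ecT[OF j] _ s js] by simp
    qed
    show "\<forall>i\<in>?I. \<forall>s\<in>carrier_vec n. \<exists>m. ((\<lambda>v. transpose_mat (e i) *\<^sub>v v) ^^ m) s = 0\<^sub>v n"
    proof (intro ballI)
      fix i and s :: "complex vec" assume i: "i \<in> ?I" and s: "s \<in> carrier_vec n"
      obtain m where m: "e i ^\<^sub>m m = 0\<^sub>m n n" using nil[OF i] by blast
      show "\<exists>m. ((\<lambda>v. transpose_mat (e i) *\<^sub>v v) ^^ m) s = 0\<^sub>v n"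
        using iter_pow_T[OF ec[OF i] s, of m] m z0T z0[OF s] by auto
    qed
    show "unit_vec n 0 \<in> carrier_vec n" by simp
    show "unit_vec n 0 \<noteq> (0\<^sub>v n :: complex vec)"
    proof
      assume "unit_vec n 0 = (0\<^sub>v n :: complex vec)"
      hence "unit_vec n 0 $ 0 = (0\<^sub>v n :: complex vec) $ 0" by simp
      thus False using n2 by simp
    qed
  qed
  then obtain y where y: "y \<in> carrier_vec n" "y \<noteq> 0\<^sub>v n" "\<forall>i\<in>?I. transpose_mat (e i) *\<^sub>v y = 0\<^sub>v n"
    by blast
  have yk: "y \<bullet> (e i *\<^sub>v v) = 0" if i: "i \<in> ?I" and v: "v \<in> carrier_vec n" for i v
  proof -
    have "y \<bullet> (e i *\<^sub>v v) = (transpose_mat (e i) *\<^sub>v y) \<bullet> v"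
      using transpose_vec_mult_scalar[OF ec[OF i] v y(1)] by simp
    also have "\<dots> = 0" using y(3) i v by simp
    finally show ?thesis .
  qed
  obtain a where a: "a < n" "y $ a \<noteq> 0" using vec_nz_entry[OF y(1,2)] by blast
  define b where "b = (if a = 0 then 1 else 0::nat)"
  have b: "b < n" "b \<noteq> a" unfolding b_def using n2 by auto
  define x0 :: "complex vec" where "x0 = y $ b \<cdot>\<^sub>v unit_vec n a - y $ a \<cdot>\<^sub>v unit_vec n b"
  have x0c: "x0 \<in> carrier_vec n" unfolding x0_def by simp
  have "y \<bullet> x0 = y $ b * y $ a - y $ a * y $ b" unfolding x0_def
    using a b y(1) by (subst scalar_prod_minus_distrib[of _ n]) auto
  hence yx0: "y \<bullet> x0 = 0" by simp
  have x0nz: "x0 \<noteq> 0\<^sub>v n"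
  proof
    assume "x0 = 0\<^sub>v n"
    hence "x0 $ b = 0" using b by simp
    moreover have "x0 $ b = - y $ a" unfolding x0_def using a b by simp
    ultimately show False using a by simp
  qed
  have "\<exists>z\<in>{v\<in>carrier_vec n. y \<bullet> v = 0}. z \<noteq> 0\<^sub>v n \<and> (\<forall>i\<in>?I. e i *\<^sub>v z = 0\<^sub>v n)"
  proof (rule common_kernel[where f = "\<lambda>i v. e i *\<^sub>v v"])
    show "finite ?I" by simp
    show "\<forall>i\<in>?I. \<forall>s\<in>{v\<in>carrier_vec n. y \<bullet> v = 0}. e i *\<^sub>v s \<in> {v\<in>carrier_vec n. y \<bullet> v = 0}"
      using evc yk by blast
    show "\<forall>i\<in>?I. \<forall>j\<in>?I. i \<noteq> j \<longrightarrow> (\<forall>s\<in>{v\<in>carrier_vec n. y \<bullet> v = 0}. e j *\<^sub>v s = 0\<^sub>v n \<longrightarrow>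
        e j *\<^sub>v (e i *\<^sub>v s) = 0\<^sub>v n)"
    proof (intro ballI impI)
      fix i j and s :: "complex vec" assume i: "i \<in> ?I" and j: "j \<in> ?I" and ij: "i \<noteq> j"
        and s: "s \<in> {v\<in>carrier_vec n. y \<bullet> v = 0}" and js: "e j *\<^sub>v s = 0\<^sub>v n"
      have "e j * e i = - (e i * e j)" using ac[OF j i] ij by auto
      thus "e j *\<^sub>v (e i *\<^sub>v s) = 0\<^sub>v n"
        using ac_kill[OF ec[OF i] ec[OF j] _ _ js] s by auto
    qed
    show "\<forall>i\<in>?I. \<forall>s\<in>{v\<in>carrier_vec n. y \<bullet> v = 0}. \<exists>m. ((\<lambda>v. e i *\<^sub>v v) ^^ m) s = 0\<^sub>v n"
    proof (intro ballI)
      fix i and s :: "complex vec" assume i: "i \<in> ?I" and s: "s \<in> {v\<in>carrier_vec n. y \<bullet> v = 0}"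
      obtain m where m: "e i ^\<^sub>m m = 0\<^sub>m n n" using nil[OF i] by blast
      show "\<exists>m. ((\<lambda>v. e i *\<^sub>v v) ^^ m) s = 0\<^sub>v n"
        using iter_pow[OF ec[OF i], of s m] s m z0[of s] by auto
    qed
    show "x0 \<in> {v\<in>carrier_vec n. y \<bullet> v = 0}" using x0c yx0 by simp
    show "x0 \<noteq> 0\<^sub>v n" by fact
  qed
  then obtain z where z: "z \<in> carrier_vec n" "y \<bullet> z = 0" "z \<noteq> 0\<^sub>v n" "\<forall>i\<in>?I. e i *\<^sub>v z = 0\<^sub>v n"
    by blast
  obtain p where p: "p < n" "z $ p \<noteq> 0" using vec_nz_entry[OF z(1,3)] by blast
  have "\<exists>q<n. q \<noteq> p \<and> y $ q \<noteq> 0"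
  proof (rule ccontr)
    assume nq: "\<not> ?thesis"
    have "y \<bullet> z = (\<Sum>l\<in>{0..<n}. y $ l * z $ l)" using z(1) unfolding scalar_prod_def by simp
    also have "\<dots> = y $ p * z $ p + (\<Sum>l\<in>{0..<n}-{p}. y $ l * z $ l)" using p by (simp add: sum.remove)
    also have "(\<Sum>l\<in>{0..<n}-{p}. y $ l * z $ l) = 0" using nq by (intro sum.neutral) auto
    finally have "y $ p = 0" using z(2) p by simp
    hence "y = 0\<^sub>v n" using nq y(1) by (intro eq_vecI) auto
    thus False using y(2) by simp
  qed
  then obtain q where q: "q < n" "q \<noteq> p" "y $ q \<noteq> 0" by blast
  define M where "M i j = u \<bullet> (e i *\<^sub>v (e j *\<^sub>v w))" for i j
  define av where "av j = e j *\<^sub>v w" for j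
  define a' where "a' j = vec n (\<lambda>l. av j $ l - (av j $ p / z $ p) * z $ l)" for j
  define \<beta> where "\<beta> i = transpose_mat (e i) *\<^sub>v u" for i
  define L where "L = {0..<n}-{p,q}"
  define X where "X i l = \<beta> i $ l - \<beta> i $ q * y $ l / y $ q" for i l
  define Y where "Y l j = a' j $ l" for l j
  have avc: "\<And>j. j \<in> ?I \<Longrightarrow> av j \<in> carrier_vec n" unfolding av_def using evc w by blast
  have a'c: "\<And>j. a' j \<in> carrier_vec n" unfolding a'_def by simp
  have \<beta>c: "\<And>i. i \<in> ?I \<Longrightarrow> \<beta> i \<in> carrier_vec n" unfolding \<beta>_def using eTvc u by blast
  have Mb: "M i j = \<beta> i \<bullet> av j" if i: "i \<in> ?I" and j: "j \<in> ?I" for i j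
    unfolding M_def \<beta>_def av_def using transpose_vec_mult_scalar[OF ec[OF i] avc[OF j, unfolded av_def] u(1)]
    by simp
  have \<beta>z: "\<beta> i \<bullet> z = 0" if i: "i \<in> ?I" for i
  proof -
    have "\<beta> i \<bullet> z = u \<bullet> (e i *\<^sub>v z)" unfolding \<beta>_def
      using transpose_vec_mult_scalar[OF ec[OF i] z(1) u(1)] by simp
    thus ?thesis using z(4) i u(1) by simp
  qed
  have lin: "v \<bullet> a' j = v \<bullet> av j - (av j $ p / z $ p) * (v \<bullet> z)"
    if v: "v \<in> carrier_vec n" and j: "j \<in> ?I" for v j
  proof -
    have "v \<bullet> a' j = (\<Sum>l\<in>{0..<n}. v $ l * av j $ l - (av j $ p / z $ p) * (v $ l * z $ l))"
      unfolding scalar_prod_def a'_def by (intro sum.cong) (auto simp: algebra_simps)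
    also have "\<dots> = v \<bullet> av j - (av j $ p / z $ p) * (v \<bullet> z)"
      unfolding scalar_prod_def using avc[OF j] z(1) v
      by (simp add: sum_subtractf sum_distrib_left)
    finally show ?thesis .
  qed
  have Mdef: "M i j = (\<Sum>l\<in>L. X i l * Y l j)" if i: "i \<in> ?I" and j: "j \<in> ?I" for i j
  proof -
    have "M i j = \<beta> i \<bullet> a' j" using Mb[OF i j] lin[OF \<beta>c[OF i] j] \<beta>z[OF i] by simp
    also have "\<dots> = (\<Sum>l\<in>L. X i l * Y l j)" unfolding L_def X_def Y_def
    proof (rule decomp[OF a'c \<beta>c[OF i] y(1) _ _ q(3) q(2)[symmetric] p(1) q(1)])
      show "y \<bullet> a' j = 0" using lin[OF y(1) j] z(2) yk[OF j w(1)] unfolding av_def by simp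
      show "a' j $ p = 0" unfolding a'_def using p by simp
    qed
    finally show ?thesis .
  qed
  have anti: "M i j + M j i = 0" if i: "i \<in> ?I" and j: "j \<in> ?I" and ij: "i \<noteq> j" for i j
  proof -
    have eij: "e i * e j \<in> carrier_mat n n" "e j * e i \<in> carrier_mat n n"
      using mult_carrier_mat[OF ec[OF i] ec[OF j]] mult_carrier_mat[OF ec[OF j] ec[OF i]] by auto
    have c1: "(e j * e i) *\<^sub>v w \<in> carrier_vec n" using eij w by auto
    have "M i j = u \<bullet> ((e i * e j) *\<^sub>v w)" unfolding M_def using ec[OF i] ec[OF j] w by simp
    also have "(e i * e j) *\<^sub>v w = - ((e j * e i) *\<^sub>v w)"
      unfolding ac[OF i j ij] using eij w by (intro uminus_mult_mat_vec) auto
    also have "u \<bullet> - ((e j * e i) *\<^sub>v w) = - (u \<bullet> ((e j * e i) *\<^sub>v w))"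
      using u(1) c1 ec[OF j] by (intro scalar_prod_uminus_right) auto
    also have "u \<bullet> ((e j * e i) *\<^sub>v w) = M j i" unfolding M_def using ec[OF i] ec[OF j] w by simp
    finally show ?thesis by simp
  qed
  have diag: "M i i \<noteq> 0" if i: "i \<in> ?I" for i
  proof -
    have "M i i = u \<bullet> cc i" unfolding M_def cc_def using ec[OF i] w by simp
    also have "\<dots> = cc i \<bullet> u" using comm_scalar_prod[OF u(1) ccc[OF i]] .
    finally show ?thesis using ccu[OF i] by simp
  qed
  have "k \<le> 2 * card L"
    by (rule final_bound[of L k M X Y]) (use Mdef anti diag in \<open>auto simp: L_def\<close>)
  moreover have "card L = n - 2" unfolding L_def using p q by (simp add: card_Diff_subset)
  ultimately show ?thesis by simp
qed

end
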